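(* Let $\mathcal{X}_0,\tilde{\mathcal{X}}_0,\mathcal{U}_0,\tilde{\mathcal{U}}_0$ be Polish spaces, let $F_*:\mathcal{X}_0\times\mathcal{U}_0\to\tilde{\mathcal{X}}_0\times\tilde{\mathcal{U}}_0$ be a bijection, and define the involution $F:\tilde{\mathcal{X}}_0\times\mathcal{X}_0\times\mathcal{U}_0\to\tilde{\mathcal{X}}_0\times\mathcal{X}_0\times\mathcal{U}_0$ by \[F(a,b,c):=\left(F_*^{(1)}(b,c),\,F_*^{-1}\left(a,F_*^{(2)}(b,c)\right)\right).\] For probability measures $\mu,\nu,\tilde\mu$ on $\mathcal{X}_0,\mathcal{U}_0,\tilde{\mathcal{X}}_0$ respectively, the following are equivalent: (a) $F^{(2,3)}(\tilde\mu\times\mu\times\nu)=\mu\times\nu$; (b) $F(\tilde\mu\times\mu\times\nu)=\tilde\mu\times\mu\times\nu$; (c) there exists a probability measure $\tilde\nu$ on $\tilde{\mathcal{U}}_0$ such that $F_*(\mu\times\nu)=\tilde\mu\times\tilde\nu$.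
   Context: A superscript $(i)$ denotes the $i$th coordinate of a map, and $(2,3)$ the pair of the 2nd and 3rd coordinates. For a measurable map $G$ and a measure $m$, $G(m):=m\circ G^{-1}$ is the pushforward. *)

theory Defs
  imports "HOL-Analysis.Analysis" "HOL-Probability.Probability"
begin

definition Finvol ::
  "('x \<times> 'u \<Rightarrow> 'tx \<times> 'tu) \<Rightarrow> 'tx \<times> 'x \<times> 'u \<Rightarrow> 'tx \<times> 'x \<times> 'u" where
  "Finvol Fs = (\<lambda>(a, b, c). (fst (Fs (b, c)), inv Fs (a, snd (Fs (b, c)))))"

end

theory Submission
  imports Defs
begin

lemma distr_bij_iff:
  assumes f: "f \<in> A \<rightarrow>\<^sub>M B" and g: "g \<in> B \<rightarrow>\<^sub>M A"
    and gf: "\<And>x. x \<in> space A \<Longrightarrow> g (f x) = x" and fg: "\<And>y. y \<in> space B \<Longrightarrow> f (g y) = y"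
    and sX: "sets X = sets A" and sY: "sets Y = sets B"
  shows "distr X B f = Y \<longleftrightarrow> X = distr Y A g"
proof
  assume h: "distr X B f = Y"
  have fX: "f \<in> X \<rightarrow>\<^sub>M B" by (subst measurable_cong_sets[OF sX refl]) (rule f)
  have "distr Y A g = distr X A (g \<circ> f)" using h distr_distr[OF g fX] by simp
  also have "\<dots> = distr X A (\<lambda>x. x)"
    by (rule distr_cong) (auto simp: gf sets_eq_imp_space_eq[OF sX])
  also have "\<dots> = X" by (rule distr_id2) (simp add: sX)
  finally show "X = distr Y A g" by simp
next
  assume h: "X = distr Y A g"
  have gY: "g \<in> Y \<rightarrow>\<^sub>M A" by (subst measurable_cong_sets[OF sY refl]) (rule g)
  have "distr X B f = distr Y B (f \<circ> g)" using h distr_distr[OF f gY] by simp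
  also have "\<dots> = distr Y B (\<lambda>x. x)"
    by (rule distr_cong) (auto simp: fg sets_eq_imp_space_eq[OF sY])
  also have "\<dots> = Y" by (rule distr_id2) (simp add: sY)
  finally show "distr X B f = Y" .
qed

lemma distr_snd_prob:
  assumes "prob_space M" "sigma_finite_measure N"
  shows "distr (M \<Otimes>\<^sub>M N) N snd = N"
proof (rule measure_eqI)
  interpret M: prob_space M by fact
  interpret N: sigma_finite_measure N by fact
  interpret P: pair_sigma_finite M N by unfold_locales
  fix A assume A: "A \<in> sets (distr (M \<Otimes>\<^sub>M N) N snd)"
  then have A': "A \<in> sets N" by simp
  have "emeasure (distr (M \<Otimes>\<^sub>M N) N snd) A = emeasure (M \<Otimes>\<^sub>M N) (space M \<times> A)"
    using A' by (auto simp add: emeasure_distr space_pair_measure dest: sets.sets_into_space intro!: arg_cong2[where f=emeasure])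
  also have "\<dots> = emeasure N A"
    using A' by (simp add: N.emeasure_pair_measure_Times M.emeasure_space_1)
  finally show "emeasure (distr (M \<Otimes>\<^sub>M N) N snd) A = emeasure N A" .
qed simp

lemma distr_assoc_prob:
  assumes "prob_space M1" "prob_space M2" "prob_space M3"
  shows "distr (M1 \<Otimes>\<^sub>M (M2 \<Otimes>\<^sub>M M3)) ((M1 \<Otimes>\<^sub>M M2) \<Otimes>\<^sub>M M3) (\<lambda>(a, x, y). ((a, x), y))
     = (M1 \<Otimes>\<^sub>M M2) \<Otimes>\<^sub>M M3"
proof (rule pair_measure_eqI[symmetric])
  interpret M1: prob_space M1 by fact
  interpret M2: prob_space M2 by fact
  interpret M3: prob_space M3 by fact
  interpret P12: pair_prob_space M1 M2 by unfold_locales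
  interpret P23: pair_prob_space M2 M3 by unfold_locales
  interpret P1: pair_sigma_finite M1 "M2 \<Otimes>\<^sub>M M3" by unfold_locales
  interpret P: pair_sigma_finite "M1 \<Otimes>\<^sub>M M2" M3 by unfold_locales
  show "sigma_finite_measure (M1 \<Otimes>\<^sub>M M2)" "sigma_finite_measure M3" by unfold_locales
  show "sets ((M1 \<Otimes>\<^sub>M M2) \<Otimes>\<^sub>M M3) = sets (distr (M1 \<Otimes>\<^sub>M (M2 \<Otimes>\<^sub>M M3)) ((M1 \<Otimes>\<^sub>M M2) \<Otimes>\<^sub>M M3) (\<lambda>(a, x, y). ((a, x), y)))"
    by simp
  fix C B assume C: "C \<in> sets (M1 \<Otimes>\<^sub>M M2)" and B: "B \<in> sets M3"
  have meas: "(\<lambda>(a, x, y). ((a, x), y)) \<in> (M1 \<Otimes>\<^sub>M (M2 \<Otimes>\<^sub>M M3)) \<rightarrow>\<^sub>M ((M1 \<Otimes>\<^sub>M M2) \<Otimes>\<^sub>M M3)"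
    by measurable
  let ?S = "(\<lambda>(a, x, y). ((a, x), y)) -` (C \<times> B) \<inter> space (M1 \<Otimes>\<^sub>M (M2 \<Otimes>\<^sub>M M3))"
  have S: "?S \<in> sets (M1 \<Otimes>\<^sub>M (M2 \<Otimes>\<^sub>M M3))"
    using measurable_sets[OF meas, of "C \<times> B"] C B by auto
  have "emeasure (distr (M1 \<Otimes>\<^sub>M (M2 \<Otimes>\<^sub>M M3)) ((M1 \<Otimes>\<^sub>M M2) \<Otimes>\<^sub>M M3) (\<lambda>(a, x, y). ((a, x), y))) (C \<times> B)
      = emeasure (M1 \<Otimes>\<^sub>M (M2 \<Otimes>\<^sub>M M3)) ?S"
    using C B by (simp add: emeasure_distr[OF meas])
  also have "\<dots> = (\<integral>\<^sup>+ a. emeasure (M2 \<Otimes>\<^sub>M M3) (Pair a -` ?S) \<partial>M1)"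
    using S by (rule sigma_finite_measure.emeasure_pair_measure_alt[OF P23.sigma_finite_measure_axioms])
  also have "\<dots> = (\<integral>\<^sup>+ a. emeasure M2 (Pair a -` C) * emeasure M3 B \<partial>M1)"
  proof (rule nn_integral_cong)
    fix a assume a: "a \<in> space M1"
    have Ca: "Pair a -` C \<in> sets M2" using C a by (simp add: sets_Pair1)
    have "Pair a -` ?S = (Pair a -` C \<inter> space M2) \<times> B"
      using a sets.sets_into_space[OF B] by (auto simp: space_pair_measure)
    also have "Pair a -` C \<inter> space M2 = Pair a -` C"
      using sets.sets_into_space[OF Ca] by auto
    finally show "emeasure (M2 \<Otimes>\<^sub>M M3) (Pair a -` ?S) = emeasure M2 (Pair a -` C) * emeasure M3 B"
      using Ca B by (simp add: M3.emeasure_pair_measure_Times)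
  qed
  also have "\<dots> = (\<integral>\<^sup>+ a. emeasure M2 (Pair a -` C) \<partial>M1) * emeasure M3 B"
    using C by (intro nn_integral_multc M2.measurable_emeasure_Pair) simp
  also have "\<dots> = emeasure (M1 \<Otimes>\<^sub>M M2) C * emeasure M3 B"
    using C by (simp add: M2.emeasure_pair_measure_alt)
  finally show "emeasure (M1 \<Otimes>\<^sub>M M2) C * emeasure M3 B =
    emeasure (distr (M1 \<Otimes>\<^sub>M (M2 \<Otimes>\<^sub>M M3)) ((M1 \<Otimes>\<^sub>M M2) \<Otimes>\<^sub>M M3) (\<lambda>(a, x, y). ((a, x), y))) (C \<times> B)"
    by simp
qed

theorem proposition2p8:
  fixes Fs :: "'x::polish_space \<times> 'u::polish_space \<Rightarrow> 'tx::polish_space \<times> 'tu::polish_space"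
    and mu :: "'x measure" and nu :: "'u measure" and tmu :: "'tx measure"
  assumes bij: "bij Fs"
    and Fs_meas: "Fs \<in> (borel \<Otimes>\<^sub>M borel) \<rightarrow>\<^sub>M (borel \<Otimes>\<^sub>M borel)"
    and Fs_inv_meas: "inv Fs \<in> (borel \<Otimes>\<^sub>M borel) \<rightarrow>\<^sub>M (borel \<Otimes>\<^sub>M borel)"
    and mu: "prob_space mu" "sets mu = sets (borel :: 'x measure)"
    and nu: "prob_space nu" "sets nu = sets (borel :: 'u measure)"
    and tmu: "prob_space tmu" "sets tmu = sets (borel :: 'tx measure)"
  shows
    "(distr (tmu \<Otimes>\<^sub>M (mu \<Otimes>\<^sub>M nu)) (borel \<Otimes>\<^sub>M borel) (snd \<circ> Finvol Fs) = mu \<Otimes>\<^sub>M nu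
      \<longleftrightarrow> distr (tmu \<Otimes>\<^sub>M (mu \<Otimes>\<^sub>M nu)) (borel \<Otimes>\<^sub>M (borel \<Otimes>\<^sub>M borel)) (Finvol Fs)
            = tmu \<Otimes>\<^sub>M (mu \<Otimes>\<^sub>M nu))
     \<and> (distr (tmu \<Otimes>\<^sub>M (mu \<Otimes>\<^sub>M nu)) (borel \<Otimes>\<^sub>M (borel \<Otimes>\<^sub>M borel)) (Finvol Fs)
            = tmu \<Otimes>\<^sub>M (mu \<Otimes>\<^sub>M nu)
      \<longleftrightarrow> (\<exists>tnu :: 'tu measure. prob_space tnu \<and> sets tnu = sets (borel :: 'tu measure) \<and>
             distr (mu \<Otimes>\<^sub>M nu) (borel \<Otimes>\<^sub>M borel) Fs = tmu \<Otimes>\<^sub>M tnu))"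
proof -
  note [measurable] = Fs_meas Fs_inv_meas
  note [measurable_cong] = mu(2) nu(2) tmu(2)
  define G where "G = inv Fs"
  note Gm[measurable] = Fs_inv_meas[folded G_def]
  have gf: "G (Fs p) = p" for p using bij by (simp add: G_def bij_is_inj)
  have fg: "Fs (G q) = q" for q using bij by (simp add: G_def bij_is_surj surj_f_inv_f)
  define M where "M = mu \<Otimes>\<^sub>M nu"
  have M_prob: "prob_space M" unfolding M_def
    using mu(1) nu(1) by (intro prob_space_pair)
  have sM[measurable_cong]: "sets M = sets (borel \<Otimes>\<^sub>M borel :: ('x \<times> 'u) measure)"
    unfolding M_def by (intro sets_pair_measure_cong mu(2) nu(2))
  define Q where "Q = distr M (borel \<Otimes>\<^sub>M borel) Fs"
  have Q_prob: "prob_space Q" unfolding Q_def using M_prob by (intro prob_space.prob_space_distr) simp_all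
  have sQ[measurable_cong]: "sets Q = sets (borel \<Otimes>\<^sub>M borel :: ('tx \<times> 'tu) measure)"
    unfolding Q_def by simp
  define Q2 where "Q2 = distr Q borel snd"
  have Q2_prob: "prob_space Q2" unfolding Q2_def using Q_prob by (intro prob_space.prob_space_distr) simp_all
  have sQ2[measurable_cong]: "sets Q2 = sets (borel :: 'tu measure)"
    unfolding Q2_def by simp
  have tmu_id: "distr tmu borel (\<lambda>x. x) = tmu" by (rule distr_id2) (simp add: tmu(2))
  have sf_Q2: "sigma_finite_measure Q2" using Q2_prob by (simp add: prob_space_imp_sigma_finite)
  have sf_Q: "sigma_finite_measure Q" using Q_prob by (simp add: prob_space_imp_sigma_finite)
  have sTQ2[measurable_cong]: "sets (tmu \<Otimes>\<^sub>M Q2) = sets (borel \<Otimes>\<^sub>M borel :: ('tx \<times> 'tu) measure)"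
    by (intro sets_pair_measure_cong tmu(2) sQ2)
  have sTM[measurable_cong]: "sets (tmu \<Otimes>\<^sub>M M) = sets (borel \<Otimes>\<^sub>M (borel \<Otimes>\<^sub>M borel) :: ('tx \<times> 'x \<times> 'u) measure)"
    by (intro sets_pair_measure_cong tmu(2) sM)
  have sTQ[measurable_cong]: "sets (tmu \<Otimes>\<^sub>M Q) = sets (borel \<Otimes>\<^sub>M (borel \<Otimes>\<^sub>M borel) :: ('tx \<times> 'tx \<times> 'tu) measure)"
    by (intro sets_pair_measure_cong tmu(2) sQ)

  have A: "distr (tmu \<Otimes>\<^sub>M M) (borel \<Otimes>\<^sub>M borel) (snd \<circ> Finvol Fs) = M \<longleftrightarrow> Q = tmu \<Otimes>\<^sub>M Q2"
  proof -
    have d1: "distr M borel (snd \<circ> Fs) = Q2"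
      unfolding Q2_def Q_def by (subst distr_distr) simp_all
    have d2: "tmu \<Otimes>\<^sub>M Q2 = distr (tmu \<Otimes>\<^sub>M M) (borel \<Otimes>\<^sub>M borel) (\<lambda>(x, y). (x, (snd \<circ> Fs) y))"
      unfolding d1[symmetric]
      by (subst tmu_id[symmetric], rule pair_measure_distr) (simp_all add: d1 sf_Q2)
    have "distr (tmu \<Otimes>\<^sub>M M) (borel \<Otimes>\<^sub>M borel) (snd \<circ> Finvol Fs)
       = distr (tmu \<Otimes>\<^sub>M M) (borel \<Otimes>\<^sub>M borel) (G \<circ> (\<lambda>(x, y). (x, (snd \<circ> Fs) y)))"
      by (rule distr_cong) (auto simp: Finvol_def G_def)
    also have "\<dots> = distr (tmu \<Otimes>\<^sub>M Q2) (borel \<Otimes>\<^sub>M borel) G"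
      unfolding d2 by (subst distr_distr) simp_all
    finally have e: "distr (tmu \<Otimes>\<^sub>M M) (borel \<Otimes>\<^sub>M borel) (snd \<circ> Finvol Fs) = distr (tmu \<Otimes>\<^sub>M Q2) (borel \<Otimes>\<^sub>M borel) G" .
    show ?thesis unfolding e Q_def
      by (subst distr_bij_iff[where g=Fs]) (auto simp: gf fg eq_commute sTQ2 sM)
  qed

  have C: "(\<exists>tnu :: 'tu measure. prob_space tnu \<and> sets tnu = sets (borel :: 'tu measure) \<and>
             distr M (borel \<Otimes>\<^sub>M borel) Fs = tmu \<Otimes>\<^sub>M tnu) \<longleftrightarrow> Q = tmu \<Otimes>\<^sub>M Q2"
  proof
    assume "\<exists>tnu :: 'tu measure. prob_space tnu \<and> sets tnu = sets (borel :: 'tu measure) \<and>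
             distr M (borel \<Otimes>\<^sub>M borel) Fs = tmu \<Otimes>\<^sub>M tnu"
    then obtain tnu :: "'tu measure" where t: "prob_space tnu" "sets tnu = sets (borel :: 'tu measure)"
      "Q = tmu \<Otimes>\<^sub>M tnu" unfolding Q_def by blast
    have "Q2 = distr (tmu \<Otimes>\<^sub>M tnu) tnu snd"
      unfolding Q2_def t(3) by (rule distr_cong) (simp_all add: t(2))
    also have "\<dots> = tnu" using tmu(1) t(1) by (intro distr_snd_prob) (simp_all add: prob_space_imp_sigma_finite)
    finally show "Q = tmu \<Otimes>\<^sub>M Q2" using t(3) by simp
  next
    assume "Q = tmu \<Otimes>\<^sub>M Q2"
    then show "\<exists>tnu :: 'tu measure. prob_space tnu \<and> sets tnu = sets (borel :: 'tu measure) \<and>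
             distr M (borel \<Otimes>\<^sub>M borel) Fs = tmu \<Otimes>\<^sub>M tnu"
      using Q2_prob sQ2 unfolding Q_def by blast
  qed

  define \<sigma> :: "'tx \<times> 'tx \<times> 'tu \<Rightarrow> 'tx \<times> 'tx \<times> 'tu" where "\<sigma> = (\<lambda>(a, x, y). (x, a, y))"
  have [measurable]: "\<sigma> \<in> borel \<Otimes>\<^sub>M (borel \<Otimes>\<^sub>M borel) \<rightarrow>\<^sub>M borel \<Otimes>\<^sub>M (borel \<Otimes>\<^sub>M borel)"
    unfolding \<sigma>_def by measurable
  let ?BBB = "borel \<Otimes>\<^sub>M (borel \<Otimes>\<^sub>M borel)"

  have B: "distr (tmu \<Otimes>\<^sub>M M) (borel \<Otimes>\<^sub>M (borel \<Otimes>\<^sub>M borel)) (Finvol Fs) = tmu \<Otimes>\<^sub>M M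
      \<longleftrightarrow> distr (tmu \<Otimes>\<^sub>M Q) ?BBB \<sigma> = tmu \<Otimes>\<^sub>M Q"
  proof -
    define \<Phi> :: "'tx \<times> 'x \<times> 'u \<Rightarrow> 'tx \<times> 'tx \<times> 'tu" where "\<Phi> = (\<lambda>(a, m). (a, Fs m))"
    define \<Psi> :: "'tx \<times> 'tx \<times> 'tu \<Rightarrow> 'tx \<times> 'x \<times> 'u" where "\<Psi> = (\<lambda>(a, q). (a, G q))"
    have [measurable]: "\<Phi> \<in> ?BBB \<rightarrow>\<^sub>M ?BBB" unfolding \<Phi>_def by measurable
    have [measurable]: "\<Psi> \<in> ?BBB \<rightarrow>\<^sub>M ?BBB" unfolding \<Psi>_def by measurable
    have dP: "distr (tmu \<Otimes>\<^sub>M M) ?BBB \<Phi> = tmu \<Otimes>\<^sub>M Q"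
      unfolding Q_def \<Phi>_def
      by (subst tmu_id[symmetric], subst pair_measure_distr)
        (simp_all add: sf_Q[unfolded Q_def])
    have "distr (tmu \<Otimes>\<^sub>M M) ?BBB (Finvol Fs) = distr (tmu \<Otimes>\<^sub>M M) ?BBB (\<Psi> \<circ> \<sigma> \<circ> \<Phi>)"
      by (rule distr_cong) (auto simp: Finvol_def G_def \<Psi>_def \<sigma>_def \<Phi>_def split: prod.split)
    also have "\<dots> = distr (distr (distr (tmu \<Otimes>\<^sub>M M) ?BBB \<Phi>) ?BBB \<sigma>) ?BBB \<Psi>"
      by (simp add: distr_distr comp_assoc)
    also have "\<dots> = distr (distr (tmu \<Otimes>\<^sub>M Q) ?BBB \<sigma>) ?BBB \<Psi>" by (simp add: dP)
    finally have e: "distr (tmu \<Otimes>\<^sub>M M) ?BBB (Finvol Fs) = distr (distr (tmu \<Otimes>\<^sub>M Q) ?BBB \<sigma>) ?BBB \<Psi>" .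
    have "distr (distr (tmu \<Otimes>\<^sub>M Q) ?BBB \<sigma>) ?BBB \<Psi> = tmu \<Otimes>\<^sub>M M
       \<longleftrightarrow> distr (tmu \<Otimes>\<^sub>M Q) ?BBB \<sigma> = distr (tmu \<Otimes>\<^sub>M M) ?BBB \<Phi>"
      by (rule distr_bij_iff) (auto simp: gf fg \<Phi>_def \<Psi>_def sTM)
    then show ?thesis unfolding e dP .
  qed

  have D: "distr (tmu \<Otimes>\<^sub>M Q) ?BBB \<sigma> = tmu \<Otimes>\<^sub>M Q \<longleftrightarrow> Q = tmu \<Otimes>\<^sub>M Q2"
  proof
    assume h: "distr (tmu \<Otimes>\<^sub>M Q) ?BBB \<sigma> = tmu \<Otimes>\<^sub>M Q"
    define \<pi> :: "'tx \<times> 'tx \<times> 'tu \<Rightarrow> 'tx \<times> 'tu" where "\<pi> = (\<lambda>(u, v, w). (u, w))"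
    have [measurable]: "\<pi> \<in> ?BBB \<rightarrow>\<^sub>M borel \<Otimes>\<^sub>M borel" unfolding \<pi>_def by measurable
    have "distr (distr (tmu \<Otimes>\<^sub>M Q) ?BBB \<sigma>) (borel \<Otimes>\<^sub>M borel) \<pi> = distr (tmu \<Otimes>\<^sub>M Q) (borel \<Otimes>\<^sub>M borel) (\<pi> \<circ> \<sigma>)"
      by (simp add: distr_distr)
    also have "\<dots> = distr (tmu \<Otimes>\<^sub>M Q) Q snd"
      by (rule distr_cong) (auto simp: \<pi>_def \<sigma>_def sQ)
    also have "\<dots> = Q" using tmu(1) sf_Q by (rule distr_snd_prob)
    finally have e1: "distr (distr (tmu \<Otimes>\<^sub>M Q) ?BBB \<sigma>) (borel \<Otimes>\<^sub>M borel) \<pi> = Q" .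
    have e2: "distr (tmu \<Otimes>\<^sub>M Q) (borel \<Otimes>\<^sub>M borel) \<pi> = tmu \<Otimes>\<^sub>M Q2"
    proof -
      have "tmu \<Otimes>\<^sub>M Q2 = distr (tmu \<Otimes>\<^sub>M Q) (borel \<Otimes>\<^sub>M borel) (\<lambda>(x, y). (x, snd y))"
        unfolding Q2_def
        by (subst tmu_id[symmetric], rule pair_measure_distr) (simp_all add: sf_Q2[unfolded Q2_def])
      also have "\<dots> = distr (tmu \<Otimes>\<^sub>M Q) (borel \<Otimes>\<^sub>M borel) \<pi>"
        by (rule distr_cong) (auto simp: \<pi>_def)
      finally show ?thesis by simp
    qed
    show "Q = tmu \<Otimes>\<^sub>M Q2" using e1 e2 h by simp
  next
    assume h: "Q = tmu \<Otimes>\<^sub>M Q2"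
    let ?BB_B = "(borel \<Otimes>\<^sub>M borel) \<Otimes>\<^sub>M borel :: (('tx \<times> 'tx) \<times> 'tu) measure"
    define \<tau> :: "'tx \<times> 'tx \<times> 'tu \<Rightarrow> ('tx \<times> 'tx) \<times> 'tu" where "\<tau> = (\<lambda>(a, x, y). ((a, x), y))"
    define \<tau>' :: "('tx \<times> 'tx) \<times> 'tu \<Rightarrow> 'tx \<times> 'tx \<times> 'tu" where "\<tau>' = (\<lambda>p. (fst (fst p), snd (fst p), snd p))"
    define sw :: "('tx \<times> 'tx) \<times> 'tu \<Rightarrow> ('tx \<times> 'tx) \<times> 'tu" where "sw = (\<lambda>p. ((snd (fst p), fst (fst p)), snd p))"
    have [measurable]: "\<tau> \<in> ?BBB \<rightarrow>\<^sub>M ?BB_B" unfolding \<tau>_def by measurable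
    have [measurable]: "\<tau>' \<in> ?BB_B \<rightarrow>\<^sub>M ?BBB" unfolding \<tau>'_def by measurable
    have [measurable]: "sw \<in> ?BB_B \<rightarrow>\<^sub>M ?BB_B" unfolding sw_def by measurable
    have sTT[measurable_cong]: "sets (tmu \<Otimes>\<^sub>M tmu) = sets (borel \<Otimes>\<^sub>M borel :: ('tx \<times> 'tx) measure)"
      by (intro sets_pair_measure_cong tmu(2))
    have sTTQ[measurable_cong]: "sets ((tmu \<Otimes>\<^sub>M tmu) \<Otimes>\<^sub>M Q2) = sets ?BB_B"
      by (intro sets_pair_measure_cong sTT sQ2)
    have a3: "distr (tmu \<Otimes>\<^sub>M Q) ?BB_B \<tau> = (tmu \<Otimes>\<^sub>M tmu) \<Otimes>\<^sub>M Q2"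
    proof -
      have "distr (tmu \<Otimes>\<^sub>M Q) ?BB_B \<tau> = distr (tmu \<Otimes>\<^sub>M (tmu \<Otimes>\<^sub>M Q2)) ((tmu \<Otimes>\<^sub>M tmu) \<Otimes>\<^sub>M Q2) \<tau>"
        using h by (intro distr_cong) (simp_all add: sTTQ)
      also have "\<dots> = (tmu \<Otimes>\<^sub>M tmu) \<Otimes>\<^sub>M Q2"
        unfolding \<tau>_def using tmu(1) Q2_prob by (intro distr_assoc_prob)
      finally show ?thesis .
    qed
    have tq: "tmu \<Otimes>\<^sub>M Q = distr ((tmu \<Otimes>\<^sub>M tmu) \<Otimes>\<^sub>M Q2) ?BBB \<tau>'"
      using a3 by (subst (asm) distr_bij_iff[where g=\<tau>']) (auto simp: \<tau>_def \<tau>'_def sTQ sTTQ)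
    have sw_inv: "distr ((tmu \<Otimes>\<^sub>M tmu) \<Otimes>\<^sub>M Q2) ?BB_B sw = (tmu \<Otimes>\<^sub>M tmu) \<Otimes>\<^sub>M Q2"
    proof -
      interpret TT: pair_prob_space tmu tmu using tmu(1) by (simp add: pair_prob_space_def pair_sigma_finite_def prob_space_imp_sigma_finite)
      have q2id: "distr Q2 borel (\<lambda>x. x) = Q2" by (rule distr_id2) (simp add: sQ2)
      have sw2: "distr (tmu \<Otimes>\<^sub>M tmu) (borel \<Otimes>\<^sub>M borel) (\<lambda>(x, y). (y, x)) = tmu \<Otimes>\<^sub>M tmu"
        by (subst TT.distr_pair_swap) (rule distr_cong, simp_all add: sTT)
      have "distr (tmu \<Otimes>\<^sub>M tmu) (borel \<Otimes>\<^sub>M borel) (\<lambda>(x, y). (y, x)) \<Otimes>\<^sub>M distr Q2 borel (\<lambda>x. x)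
          = distr ((tmu \<Otimes>\<^sub>M tmu) \<Otimes>\<^sub>M Q2) ?BB_B (\<lambda>(x, y). ((\<lambda>(x, y). (y, x)) x, y))"
        by (rule pair_measure_distr) (simp_all add: q2id sf_Q2)
      also have "\<dots> = distr ((tmu \<Otimes>\<^sub>M tmu) \<Otimes>\<^sub>M Q2) ?BB_B sw"
        by (rule distr_cong) (auto simp: sw_def)
      finally show ?thesis using sw2 q2id by simp
    qed
    have "distr (tmu \<Otimes>\<^sub>M Q) ?BBB \<sigma> = distr ((tmu \<Otimes>\<^sub>M tmu) \<Otimes>\<^sub>M Q2) ?BBB (\<sigma> \<circ> \<tau>')"
      unfolding tq by (simp add: distr_distr)
    also have "\<dots> = distr ((tmu \<Otimes>\<^sub>M tmu) \<Otimes>\<^sub>M Q2) ?BBB (\<tau>' \<circ> sw)"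
      by (rule distr_cong) (auto simp: \<sigma>_def \<tau>'_def sw_def)
    also have "\<dots> = distr (distr ((tmu \<Otimes>\<^sub>M tmu) \<Otimes>\<^sub>M Q2) ?BB_B sw) ?BBB \<tau>'"
      by (simp add: distr_distr)
    also have "\<dots> = tmu \<Otimes>\<^sub>M Q" unfolding sw_inv tq ..
    finally show "distr (tmu \<Otimes>\<^sub>M Q) ?BBB \<sigma> = tmu \<Otimes>\<^sub>M Q" .
  qed

  show ?thesis unfolding M_def[symmetric] using A B C D by blast
qed

end
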